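(* The three-qubit Fredkin gate $F_3=|0\rangle\langle0|\otimes I_2\otimes I_2+|1\rangle\langle1|\otimes \mathrm{SWAP}$, where $\mathrm{SWAP}|b,c\rangle=|c,b\rangle$ for $b,c\in\{0,1\}$, has $\mathrm{sr}(F_3)=4$.
   Context: $I_2$ is the $2\times 2$ identity; $\{|0\rangle,|1\rangle\}$ is the standard basis of $\mathbb{C}^2$. For a matrix $U$ on $\mathbb{C}^2\otimes\mathbb{C}^2\otimes\mathbb{C}^2$ (systems $A,B,C$), its Schmidt rank $\mathrm{sr}(U)$ is the least integer $r$ such that $U=\sum_{j=1}^r A_j\otimes B_j\otimes C_j$ with $A_j,B_j,C_j$ complex $2\times 2$ matrices (i.e. the tensor rank of $U$). *)

theory Defs
  imports Complex_Main
begin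

text \<open>Qubit basis index: False = |0>, True = |1>.
  An operator on C^2 (x) C^2 (x) C^2 (systems A,B,C) is given by its matrix entries
  U (a,b,c) (a',b',c') = <a b c| U |a' b' c'>.\<close>

type_synonym qmat = "bool \<Rightarrow> bool \<Rightarrow> complex"
type_synonym op3 = "bool \<times> bool \<times> bool \<Rightarrow> bool \<times> bool \<times> bool \<Rightarrow> complex"

definition tensor3 :: "qmat \<Rightarrow> qmat \<Rightarrow> qmat \<Rightarrow> op3" where
  "tensor3 A B C = (\<lambda>(a,b,c) (a',b',c'). A a a' * B b b' * C c c')"

definition schmidt_rank :: "op3 \<Rightarrow> nat" where
  "schmidt_rank U = (LEAST r. \<exists>As Bs Cs :: nat \<Rightarrow> qmat.
      U = (\<lambda>x y. \<Sum>j<r. tensor3 (As j) (Bs j) (Cs j) x y))"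

definition id2 :: qmat where "id2 = (\<lambda>i j. if i = j then 1 else 0)"

definition proj2 :: "bool \<Rightarrow> qmat" where "proj2 k = (\<lambda>i j. if i = k \<and> j = k then 1 else 0)"

definition swap2 :: "bool \<times> bool \<Rightarrow> bool \<times> bool \<Rightarrow> complex" where
  "swap2 = (\<lambda>(b,c) (b',c'). if b = c' \<and> c = b' then 1 else 0)"

definition fredkin :: op3 where
  "fredkin = (\<lambda>(a,b,c) (a',b',c').
      proj2 False a a' * id2 b b' * id2 c c' + proj2 True a a' * swap2 (b,c) (b',c'))"

end

theory Submission
  imports Defs "HOL-Analysis.Analysis"
begin

definition gi :: "bool \<times> bool \<Rightarrow> nat" where
  "gi p = (if fst p then 2 else 0) + (if snd p then 1 else 0)"

lemma sum_bb: "(\<Sum>k\<in>(UNIV::(bool\<times>bool) set). f k :: 'a::comm_monoid_add) = f (False,False) + f (False,True) + f (True,False) + f (True,True)"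
proof -
  have U: "(UNIV::(bool\<times>bool) set) = {(False,False),(False,True),(True,False),(True,True)}"
    by (auto simp: UNIV_bool)
  show ?thesis unfolding U by (simp add: add.assoc)
qed

lemma no_small:
  fixes r :: nat
  assumes r: "r < 4"
    and eq: "fredkin = (\<lambda>x y. \<Sum>j<r. tensor3 (As j) (Bs j) (Cs j) x y)"
  shows False
proof -
  have slice: "(if q = p then 1 else 0) = (\<Sum>j<r. As j True True * Cs j (snd p) (fst p) * Bs j (fst q) (snd q))" for p q :: "bool\<times>bool"
  proof -
    have "fredkin (True, fst q, snd p) (True, snd q, fst p) = (if q = p then 1 else 0)"
      by (cases p; cases q) (auto simp: fredkin_def proj2_def swap2_def id2_def)
    moreover have "fredkin (True, fst q, snd p) (True, snd q, fst p) = (\<Sum>j<r. As j True True * Cs j (snd p) (fst p) * Bs j (fst q) (snd q))"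
      by (subst eq) (simp add: tensor3_def mult_ac)
    ultimately show ?thesis by simp
  qed
  define U :: "complex^(bool\<times>bool)^(bool\<times>bool)" where
    "U = (\<chi> p k. if gi k < r then As (gi k) True True * Cs (gi k) (snd p) (fst p) else 0)"
  define V :: "complex^(bool\<times>bool)^(bool\<times>bool)" where
    "V = (\<chi> k q. if gi k < r then Bs (gi k) (fst q) (snd q) else 0)"
  have "U ** V = mat 1"
  proof (subst vec_eq_iff, intro allI, subst vec_eq_iff, intro allI)
    fix p q :: "bool\<times>bool"
    define h where "h j = As j True True * Cs j (snd p) (fst p) * Bs j (fst q) (snd q)" for j
    have "(U ** V) $ p $ q = (\<Sum>k\<in>UNIV. (if gi k < r then h (gi k) else 0))"
      by (simp add: matrix_matrix_mult_def U_def V_def h_def) (rule sum.cong, auto simp: h_def)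
    also have "\<dots> = (\<Sum>j<r. h j)"
      using r by (simp add: sum_bb gi_def) (auto simp: lessThan_Suc numeral_eq_Suc less_Suc_eq)
    also have "\<dots> = mat 1 $ p $ q"
      using slice[of q p] by (auto simp: h_def mat_def)
    finally show "(U ** V) $ p $ q = mat 1 $ p $ q" .
  qed
  then have "det U * det V = 1" by (metis det_mul det_I)
  moreover have "column (True,True) U = 0"
    using r by (simp add: column_def U_def gi_def vec_eq_iff)
  then have "det U = 0" by (rule det_zero_column)
  ultimately show False by simp
qed

theorem mainTheorem11:
  shows "schmidt_rank fredkin = 4"
  unfolding schmidt_rank_def
proof (rule Least_equality)
  define As :: "nat \<Rightarrow> qmat" where "As j = (if j = 0 then (\<lambda>a b. if a = b then (if a then 1/2 else 1) else 0)
     else if j = 2 then (\<lambda>a b. if a \<and> b then -1/2 else 0) else (\<lambda>a b. if a \<and> b then 1/2 else 0))" for j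
  define Bs :: "nat \<Rightarrow> qmat" where "Bs j = (if j = 0 then id2
     else if j = 1 then (\<lambda>a b. if a \<noteq> b then 1 else 0)
     else if j = 2 then (\<lambda>a b. if a \<noteq> b then (if a then -1 else 1) else 0)
     else (\<lambda>a b. if a = b then (if a then -1 else 1) else 0))" for j
  show "\<exists>As Bs Cs :: nat \<Rightarrow> qmat. fredkin = (\<lambda>x y. \<Sum>j<4. tensor3 (As j) (Bs j) (Cs j) x y)"
  proof (intro exI)
    show "fredkin = (\<lambda>x y. \<Sum>j<4. tensor3 (As j) (Bs j) (Bs j) x y)"
    proof (intro ext)
      fix x y :: "bool\<times>bool\<times>bool"
      obtain a b c where x: "x = (a,b,c)" by (cases x) auto
      obtain a' b' c' where y: "y = (a',b',c')" by (cases y) auto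
      show "fredkin x y = (\<Sum>j<4. tensor3 (As j) (Bs j) (Bs j) x y)"
        unfolding x y
        by (cases a; cases b; cases c; cases a'; cases b'; cases c')
           (simp_all add: fredkin_def tensor3_def As_def Bs_def id2_def proj2_def swap2_def
              lessThan_Suc numeral_eq_Suc)
    qed
  qed
next
  fix r assume "\<exists>As Bs Cs :: nat \<Rightarrow> qmat. fredkin = (\<lambda>x y. \<Sum>j<r. tensor3 (As j) (Bs j) (Cs j) x y)"
  then obtain As Bs Cs where "fredkin = (\<lambda>x y. \<Sum>j<r. tensor3 (As j) (Bs j) (Cs j) x y)" by blast
  then show "4 \<le> r" using no_small[of r] by (meson not_le)
qed

end
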